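(* Let $G=(V,E,c_V^G,c_E^G)$ and $H=(V,E,c_V^H,c_E^H)$ be two capacitated graphs on the same graph $(V,E)$ that differ only in the capacity of one edge $(s,t)\in E$ (all vertex capacities and all other edge capacities coincide). Assume that in the executions of Rising-Tide on $G$ and on $H$ no two vertices become saturated simultaneously, and that the dependency graphs coincide, $D_G=D_H$. Let $\mu_G,\mu_H$ be the outputs of Rising-Tide on $G$ and $H$. Then \[\sum_i\left|\Big(c_V^G(i)-\sum_j\mu_G(i,j)\Big)-\Big(c_V^H(i)-\sum_j\mu_H(i,j)\Big)\right|\le 2|c_E^G(s,t)-c_E^H(s,t)|.\]
   Context: Capacitated graphs have nonnegative vertex capacities $c_V$ and edge capacities $c_E$; edges may include self-loops, and in $\sum_j\mu(i,j)$ a self-loop at $i$ counts once. A feasible fractional matching $\mu:E\to\mathbb{R}_{\ge0}$ satisfies $\mu(e)\le c_E(e)$ and $\sum_j\mu(i,j)\le c_V(i)$. Vertex $i$ is saturated if $\sum_j\mu(i,j)=c_V(i)$; edge $e$ is saturated if $\mu(e)=c_E(e)$. Rising-Tide: set $E'=\{e\in E:c_E(e)>0\}$ and $\mu\equiv0$; while $E'\ne\emptyset$: choose the maximum $\delta\ge0$ such that $\mu+\delta\mathbf{1}_{E'}$ is feasible, set $\mu\gets\mu+\delta\mathbf{1}_{E'}$, and remove from $E'$ every edge $(i,j)$ such that $i$, $j$, or $(i,j)$ is saturated; return $\mu$. Dependency graph $D_G$: the directed graph on $V$ which, for each edge $(i,j)\in E$, contains $j\to i$ if $i$ is saturated at the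 moment $(i,j)$ is removed from $E'$ in the execution on $G$, and contains $i\to j$ if $j$ is saturated at that moment. *)

theory Defs
  imports Complex_Main
begin

text \<open>A capacitated graph is given by a finite vertex set V, an edge set E whose
elements are sets of one (self-loop) or two vertices, vertex capacities cV and
edge capacities cE.\<close>

definition cgraph :: "'v set \<Rightarrow> 'v set set \<Rightarrow> bool" where
  "cgraph V E \<longleftrightarrow> finite V \<and> (\<forall>e\<in>E. e \<subseteq> V \<and> (card e = 1 \<or> card e = 2))"

text \<open>load of vertex i: sum over j of mu(i,j), a self-loop counted once\<close>
definition vload :: "'v set set \<Rightarrow> ('v set \<Rightarrow> real) \<Rightarrow> 'v \<Rightarrow> real" where
  "vload E mu i = (\<Sum>e\<in>{e\<in>E. i \<in> e}. mu e)"

definition feasible ::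
  "'v set \<Rightarrow> 'v set set \<Rightarrow> ('v \<Rightarrow> real) \<Rightarrow> ('v set \<Rightarrow> real) \<Rightarrow> ('v set \<Rightarrow> real) \<Rightarrow> bool" where
  "feasible V E cV cE mu \<longleftrightarrow>
     (\<forall>e\<in>E. 0 \<le> mu e \<and> mu e \<le> cE e) \<and> (\<forall>i\<in>V. vload E mu i \<le> cV i)"

definition vsat :: "'v set set \<Rightarrow> ('v \<Rightarrow> real) \<Rightarrow> ('v set \<Rightarrow> real) \<Rightarrow> 'v \<Rightarrow> bool" where
  "vsat E cV mu i \<longleftrightarrow> vload E mu i = cV i"

definition esat :: "('v set \<Rightarrow> real) \<Rightarrow> ('v set \<Rightarrow> real) \<Rightarrow> 'v set \<Rightarrow> bool" where
  "esat cE mu e \<longleftrightarrow> mu e = cE e"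

definition raise :: "'v set set \<Rightarrow> real \<Rightarrow> ('v set \<Rightarrow> real) \<Rightarrow> ('v set \<Rightarrow> real)" where
  "raise E' d mu = (\<lambda>e. mu e + (if e \<in> E' then d else 0))"

text \<open>the maximum delta >= 0 keeping mu + delta 1_{E'} feasible (the feasible set of
deltas is a closed bounded interval whenever E' is a nonempty set of edges)\<close>
definition rt_delta ::
  "'v set \<Rightarrow> 'v set set \<Rightarrow> ('v \<Rightarrow> real) \<Rightarrow> ('v set \<Rightarrow> real) \<Rightarrow> ('v set \<Rightarrow> real) \<Rightarrow> 'v set set \<Rightarrow> real" where
  "rt_delta V E cV cE mu E' = Sup {d. 0 \<le> d \<and> feasible V E cV cE (raise E' d mu)}"

definition rt_step ::
  "'v set \<Rightarrow> 'v set set \<Rightarrow> ('v \<Rightarrow> real) \<Rightarrow> ('v set \<Rightarrow> real)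
   \<Rightarrow> ('v set \<Rightarrow> real) \<times> 'v set set \<Rightarrow> ('v set \<Rightarrow> real) \<times> 'v set set" where
  "rt_step V E cV cE st =
     (let mu = fst st; E' = snd st;
          mu' = raise E' (rt_delta V E cV cE mu E') mu
      in (mu', {e\<in>E'. \<not> (\<exists>i\<in>e. vsat E cV mu' i) \<and> \<not> esat cE mu' e}))"

fun rt_state ::
  "'v set \<Rightarrow> 'v set set \<Rightarrow> ('v \<Rightarrow> real) \<Rightarrow> ('v set \<Rightarrow> real) \<Rightarrow> nat
   \<Rightarrow> ('v set \<Rightarrow> real) \<times> 'v set set" where
  "rt_state V E cV cE 0 = ((\<lambda>_. 0), {e\<in>E. cE e > 0})"
| "rt_state V E cV cE (Suc k) =
     (if snd (rt_state V E cV cE k) = {} then rt_state V E cV cE k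
      else rt_step V E cV cE (rt_state V E cV cE k))"

definition rising_tide ::
  "'v set \<Rightarrow> 'v set set \<Rightarrow> ('v \<Rightarrow> real) \<Rightarrow> ('v set \<Rightarrow> real) \<Rightarrow> ('v set \<Rightarrow> real)" where
  "rising_tide V E cV cE =
     fst (rt_state V E cV cE (LEAST k. snd (rt_state V E cV cE k) = {}))"

text \<open>Dependency graph: arc (j,i) (i.e. j -> i) for an edge {i,j} removed from E'
in round k such that i is saturated at that moment.\<close>
definition dep_graph ::
  "'v set \<Rightarrow> 'v set set \<Rightarrow> ('v \<Rightarrow> real) \<Rightarrow> ('v set \<Rightarrow> real) \<Rightarrow> ('v \<times> 'v) set" where
  "dep_graph V E cV cE =
     {(j, i). \<exists>k. {i, j} \<in> E \<and> {i, j} \<in> snd (rt_state V E cV cE k)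
        \<and> {i, j} \<notin> snd (rt_state V E cV cE (Suc k))
        \<and> vsat E cV (fst (rt_state V E cV cE (Suc k))) i}"

definition no_simult_sat ::
  "'v set \<Rightarrow> 'v set set \<Rightarrow> ('v \<Rightarrow> real) \<Rightarrow> ('v set \<Rightarrow> real) \<Rightarrow> bool" where
  "no_simult_sat V E cV cE \<longleftrightarrow>
     card {i\<in>V. vsat E cV (fst (rt_state V E cV cE 0)) i} \<le> 1 \<and>
     (\<forall>k. card {i\<in>V. vsat E cV (fst (rt_state V E cV cE (Suc k))) i
                    \<and> \<not> vsat E cV (fst (rt_state V E cV cE k)) i} \<le> 1)"

end

theory Submission
  imports Defs
begin

lemma sup_constr:
  fixes S :: "real set"
  assumes "S \<noteq> {}" "bdd_above S" "\<forall>d\<in>S. a + c*d \<le> b" "c \<ge> 0"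
  shows "a + c * Sup S \<le> b"
proof (cases "c = 0")
  case True
  then obtain d0 where "d0 \<in> S" using assms(1) by blast
  then show ?thesis using assms(3) True by auto
next
  case False
  then have cp: "c > 0" using assms(4) by auto
  have "\<forall>d\<in>S. d \<le> (b - a) / c" using assms(3) cp by (auto simp: pos_le_divide_eq algebra_simps)
  then have "Sup S \<le> (b - a) / c" using assms(1) by (intro cSup_least) auto
  then have "c * Sup S \<le> b - a" using cp by (simp add: pos_le_divide_eq mult.commute)
  then show ?thesis by simp
qed

lemma finite_eps:
  assumes "finite X"
    and "\<forall>x\<in>X. \<exists>\<epsilon>>0. \<forall>\<eta>. 0 < \<eta> \<and> \<eta> \<le> \<epsilon> \<longrightarrow> P x \<eta>"
  shows "\<exists>\<epsilon>>0. \<forall>x\<in>X. \<forall>\<eta>. 0 < \<eta> \<and> \<eta> \<le> \<epsilon> \<longrightarrow> P x (\<eta>::real)"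
  using assms
proof (induction X rule: finite_induct)
  case empty
  then show ?case by (intro exI[of _ 1]) auto
next
  case (insert y X)
  then obtain e1 where e1: "e1 > 0" "\<forall>x\<in>X. \<forall>\<eta>. 0 < \<eta> \<and> \<eta> \<le> e1 \<longrightarrow> P x \<eta>" by auto
  from insert obtain e2 where e2: "e2 > 0" "\<forall>\<eta>. 0 < \<eta> \<and> \<eta> \<le> e2 \<longrightarrow> P y \<eta>" by auto
  show ?case using e1 e2 by (intro exI[of _ "min e1 e2"]) auto
qed

lemma vload_raise:
  assumes "finite E" "A \<subseteq> E"
  shows "vload E (raise A d M) i = vload E M i + d * real (card {e\<in>A. i \<in> e})"
proof -
  have "vload E (raise A d M) i = vload E M i + (\<Sum>e\<in>{e\<in>E. i\<in>e}. (if e \<in> A then d else 0))"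
    unfolding vload_def raise_def by (simp add: sum.distrib)
  also have "(\<Sum>e\<in>{e\<in>E. i\<in>e}. (if e \<in> A then d else 0)) = (\<Sum>e\<in>{e\<in>E. i\<in>e} \<inter> A. d)"
    using assms sum.inter_restrict[of "{e\<in>E. i\<in>e}" "\<lambda>_. d" A] by simp
  also have "{e\<in>E. i\<in>e} \<inter> A = {e\<in>A. i \<in> e}" using assms by auto
  finally show ?thesis by simp
qed

lemma raise0: "raise A 0 M = M" by (simp add: raise_def)

lemma feasible_raise_iff:
  assumes "finite E" "A \<subseteq> E"
  shows "feasible V E cV cE (raise A d M) \<longleftrightarrow>
    (\<forall>e\<in>E. 0 \<le> M e + (if e \<in> A then d else 0) \<and> M e + (if e \<in> A then d else 0) \<le> cE e) \<and>
    (\<forall>i\<in>V. vload E M i + d * real (card {e\<in>A. i \<in> e}) \<le> cV i)"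
  unfolding feasible_def using vload_raise[OF assms] by (simp add: raise_def)

lemma delta_props:
  assumes cg: "cgraph V E" and fM: "feasible V E cV cE M" and AE: "A \<subseteq> E" and An: "A \<noteq> {}"
  defines "d \<equiv> rt_delta V E cV cE M A"
  shows "0 \<le> d" "feasible V E cV cE (raise A d M)"
    "\<exists>e\<in>A. (\<exists>i\<in>e. vsat E cV (raise A d M) i) \<or> esat cE (raise A d M) e"
proof -
  have "E \<subseteq> Pow V" using cg unfolding cgraph_def by auto
  then have fE: "finite E" using cg unfolding cgraph_def by (simp add: finite_subset)
  define D where "D = {d. 0 \<le> d \<and> feasible V E cV cE (raise A d M)}"
  have dD: "d = Sup D" unfolding d_def rt_delta_def D_def by simp
  have M0: "\<forall>e\<in>E. 0 \<le> M e \<and> M e \<le> cE e" "\<forall>i\<in>V. vload E M i \<le> cV i"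
    using fM unfolding feasible_def by auto
  have D0: "0 \<in> D" unfolding D_def using fM by (simp add: raise0)
  then have Dne: "D \<noteq> {}" by auto
  obtain e0 where e0: "e0 \<in> A" using An by auto
  have Dchar: "\<And>x. x \<in> D \<longleftrightarrow> 0 \<le> x \<and> (\<forall>e\<in>E. 0 \<le> M e + (if e \<in> A then x else 0) \<and> M e + (if e \<in> A then x else 0) \<le> cE e) \<and>
    (\<forall>i\<in>V. vload E M i + x * real (card {e\<in>A. i \<in> e}) \<le> cV i)"
    unfolding D_def using feasible_raise_iff[OF fE AE] by simp
  have bdd: "bdd_above D"
  proof (rule bdd_aboveI[of _ "cE e0 - M e0"])
    fix x assume "x \<in> D"
    then have "M e0 + x \<le> cE e0" using Dchar e0 AE by fastforce
    then show "x \<le> cE e0 - M e0" by simp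
  qed
  have d0: "0 \<le> d" unfolding dD using cSup_upper[OF D0 bdd] .
  then show "0 \<le> d" .
  have dinD: "d \<in> D"
  proof -
    have "\<forall>e\<in>E. 0 \<le> M e + (if e \<in> A then d else 0) \<and> M e + (if e \<in> A then d else 0) \<le> cE e"
    proof
      fix e assume eE: "e \<in> E"
      show "0 \<le> M e + (if e \<in> A then d else 0) \<and> M e + (if e \<in> A then d else 0) \<le> cE e"
      proof (cases "e \<in> A")
        case True
        have "\<forall>x\<in>D. M e + 1 * x \<le> cE e"
        proof
          fix x assume "x \<in> D"
          then show "M e + 1 * x \<le> cE e" using Dchar[of x] True eE by auto
        qed
        then have "M e + 1 * Sup D \<le> cE e"
          using sup_constr[OF Dne bdd, of "M e" 1 "cE e"] by auto
        then show ?thesis using True M0 eE d0 dD by auto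
      qed (use M0 eE in auto)
    qed
    moreover have "\<forall>i\<in>V. vload E M i + d * real (card {e\<in>A. i \<in> e}) \<le> cV i"
    proof
      fix i assume iV: "i \<in> V"
      have "vload E M i + real (card {e\<in>A. i \<in> e}) * Sup D \<le> cV i"
        using sup_constr[OF Dne bdd, of "vload E M i" "real (card {e\<in>A. i \<in> e})" "cV i"] Dchar iV
        by (auto simp: mult.commute)
      then show "vload E M i + d * real (card {e\<in>A. i \<in> e}) \<le> cV i" by (simp add: dD mult.commute)
    qed
    ultimately show ?thesis using Dchar d0 by blast
  qed
  then show fd: "feasible V E cV cE (raise A d M)" unfolding D_def by simp
  show "\<exists>e\<in>A. (\<exists>i\<in>e. vsat E cV (raise A d M) i) \<or> esat cE (raise A d M) e"
  proof (rule ccontr)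
    assume H: "\<not> ?thesis"
    define M' where "M' = raise A d M"
    have fM': "\<forall>e\<in>E. 0 \<le> M' e \<and> M' e \<le> cE e" "\<forall>i\<in>V. vload E M' i \<le> cV i"
      using fd unfolding feasible_def M'_def by auto
    have Me: "\<forall>e\<in>A. M' e < cE e"
    proof
      fix e assume eA: "e \<in> A"
      then have "\<not> esat cE M' e" using H unfolding M'_def by blast
      then have "M' e \<noteq> cE e" unfolding esat_def .
      moreover have "M' e \<le> cE e" using fM'(1) eA AE by blast
      ultimately show "M' e < cE e" by simp
    qed
    have vl: "\<And>i. vload E M' i = vload E M i + d * real (card {e\<in>A. i \<in> e})"
      unfolding M'_def using vload_raise[OF fE AE] .
    have Mv: "\<forall>i\<in>V. card {e\<in>A. i \<in> e} > 0 \<longrightarrow> vload E M' i < cV i"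
    proof (intro ballI impI)
      fix i assume iV: "i \<in> V" and c: "card {e\<in>A. i \<in> e} > 0"
      then have "{e\<in>A. i \<in> e} \<noteq> {}" by (intro notI) simp
      then obtain e where "e \<in> A" "i \<in> e" by blast
      then have "\<not> vsat E cV M' i" using H unfolding M'_def by blast
      then have "vload E M' i \<noteq> cV i" unfolding vsat_def .
      moreover have "vload E M' i \<le> cV i" using fM'(2) iV by blast
      ultimately show "vload E M' i < cV i" by simp
    qed
    have fA: "finite A" using fE AE finite_subset by auto
    have fV: "finite V" using cg unfolding cgraph_def by auto
    have epsA: "\<forall>e\<in>A. \<exists>\<epsilon>>0. \<forall>\<eta>. 0 < \<eta> \<and> \<eta> \<le> \<epsilon> \<longrightarrow> M' e + \<eta> \<le> cE e"
    proof
      fix e assume "e \<in> A"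
      then have "cE e - M' e > 0" using Me by auto
      then show "\<exists>\<epsilon>>0. \<forall>\<eta>. 0 < \<eta> \<and> \<eta> \<le> \<epsilon> \<longrightarrow> M' e + \<eta> \<le> cE e"
        by (intro exI[of _ "cE e - M' e"]) auto
    qed
    obtain e1 where e1: "e1 > 0" "\<forall>e\<in>A. \<forall>\<eta>. 0 < \<eta> \<and> \<eta> \<le> e1 \<longrightarrow> M' e + \<eta> \<le> cE e"
      using finite_eps[OF fA epsA] by blast
    have epsV: "\<forall>i\<in>V. \<exists>\<epsilon>>0. \<forall>\<eta>. 0 < \<eta> \<and> \<eta> \<le> \<epsilon> \<longrightarrow> vload E M' i + \<eta> * real (card {e\<in>A. i \<in> e}) \<le> cV i"
    proof
      fix i assume iV: "i \<in> V"
      show "\<exists>\<epsilon>>0. \<forall>\<eta>. 0 < \<eta> \<and> \<eta> \<le> \<epsilon> \<longrightarrow> vload E M' i + \<eta> * real (card {e\<in>A. i \<in> e}) \<le> cV i"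
      proof (cases "card {e\<in>A. i \<in> e} > 0")
        case True
        define c where "c = real (card {e\<in>A. i \<in> e})"
        have cp: "c > 0" using True c_def by simp
        have sl: "cV i - vload E M' i > 0" using Mv iV True by auto
        show ?thesis
        proof (intro exI[of _ "(cV i - vload E M' i) / c"] conjI allI impI)
          show "(cV i - vload E M' i) / c > 0" using sl cp by simp
          fix \<eta> assume "0 < \<eta> \<and> \<eta> \<le> (cV i - vload E M' i) / c"
          then have "\<eta> * c \<le> cV i - vload E M' i" using cp by (simp add: pos_le_divide_eq)
          then show "vload E M' i + \<eta> * real (card {e\<in>A. i \<in> e}) \<le> cV i" unfolding c_def by simp
        qed
      next
        case False
        then show ?thesis using fM'(2) iV by (intro exI[of _ 1]) auto
      qed
    qed
    obtain e2 where e2: "e2 > 0" "\<forall>i\<in>V. \<forall>\<eta>. 0 < \<eta> \<and> \<eta> \<le> e2 \<longrightarrow> vload E M' i + \<eta> * real (card {e\<in>A. i \<in> e}) \<le> cV i"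
      using finite_eps[OF fV epsV] by blast
    define \<eta> where "\<eta> = min e1 e2"
    have ep: "\<eta> > 0" "\<eta> \<le> e1" "\<eta> \<le> e2" using e1 e2 unfolding \<eta>_def by auto
    have "d + \<eta> \<in> D"
      unfolding Dchar
    proof (intro conjI ballI)
      show "0 \<le> d + \<eta>" using d0 ep by simp
    next
      fix e assume eE: "e \<in> E"
      show "0 \<le> M e + (if e \<in> A then d + \<eta> else 0)" using M0 eE d0 ep by auto
      show "M e + (if e \<in> A then d + \<eta> else 0) \<le> cE e"
      proof (cases "e \<in> A")
        case True
        then have "M' e + \<eta> \<le> cE e" using e1 ep by auto
        then show ?thesis using True unfolding M'_def raise_def by simp
      qed (use M0 eE in auto)
    next
      fix i assume iV: "i \<in> V"
      have "vload E M' i + \<eta> * real (card {e\<in>A. i \<in> e}) \<le> cV i" using e2 ep iV by auto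
      then show "vload E M i + (d + \<eta>) * real (card {e\<in>A. i \<in> e}) \<le> cV i"
        using vl by (simp add: algebra_simps)
    qed
    then have "d + \<eta> \<le> d" unfolding dD using cSup_upper[OF _ bdd] by blast
    then show False using ep by simp
  qed
qed


lemma cgraph_finE: "cgraph V E \<Longrightarrow> finite E"
proof -
  assume cg: "cgraph V E"
  have "E \<subseteq> Pow V" using cg unfolding cgraph_def by auto
  then show "finite E" using cg unfolding cgraph_def by (simp add: finite_subset)
qed

lemma edge_pair:
  assumes "card e = 1 \<or> card e = 2" "i \<in> e"
  shows "\<exists>j. e = {i, j}"
proof (cases "card e = 1")
  case True
  then obtain x where "e = {x}" by (auto simp: card_1_singleton_iff)
  then show ?thesis using assms(2) by auto
next
  case False
  then have "card e = 2" using assms(1) by simp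
  then obtain x y where "e = {x, y}" "x \<noteq> y" by (auto simp: card_2_iff)
  then show ?thesis using assms(2) by (auto simp: insert_commute)
qed

lemma ex_switch: "P (0::nat) \<Longrightarrow> \<not> P n \<Longrightarrow> \<exists>k. P k \<and> \<not> P (Suc k)"
  by (induction n) auto

definition owns :: "('v \<times> 'v) set \<Rightarrow> 'v \<Rightarrow> 'v set \<Rightarrow> bool" where
  "owns D i e \<longleftrightarrow> (\<exists>j. e = {i, j} \<and> (j, i) \<in> D)"

locale RT =
  fixes V :: "'v set" and E :: "'v set set" and cV :: "'v \<Rightarrow> real" and cE :: "'v set \<Rightarrow> real"
  assumes cg: "cgraph V E" and cVnn: "\<forall>i\<in>V. 0 \<le> cV i" and cEnn: "\<forall>e\<in>E. 0 \<le> cE e"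
begin

abbreviation "rs k \<equiv> rt_state V E cV cE k"
abbreviation "mu k \<equiv> fst (rs k)"
abbreviation "act k \<equiv> snd (rs k)"

lemma finE: "finite E" using cgraph_finE[OF cg] .

lemma step:
  assumes "act k \<noteq> {}"
  shows "mu (Suc k) = raise (act k) (rt_delta V E cV cE (mu k) (act k)) (mu k)"
    "act (Suc k) = {e\<in>act k. \<not> (\<exists>i\<in>e. vsat E cV (mu (Suc k)) i) \<and> \<not> esat cE (mu (Suc k)) e}"
  using assms by (simp_all add: rt_step_def Let_def)

lemma step_empty: "act k = {} \<Longrightarrow> rs (Suc k) = rs k" by simp

declare rt_state.simps(2)[simp del]

lemma act_mono1: "act (Suc k) \<subseteq> act k"
proof (cases "act k = {}")
  case True then show ?thesis using step_empty[of k] by simp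
next
  case False then show ?thesis using step(2)[OF False] by blast
qed

lemma act_mono: "k \<le> m \<Longrightarrow> act m \<subseteq> act k"
proof (induction m rule: dec_induct)
  case base then show ?case by simp
next
  case (step m) then show ?case using act_mono1[of m] by blast
qed

lemma act_sub: "act k \<subseteq> E"
  using act_mono[of 0 k] by auto

lemma mu_Suc_frozen: "e \<notin> act k \<Longrightarrow> mu (Suc k) e = mu k e"
proof (cases "act k = {}")
  case True then show ?thesis using step_empty[of k] by simp
next
  case False then show "e \<notin> act k \<Longrightarrow> ?thesis" using step(1)[OF False] by (simp add: raise_def)
qed

lemma frozen: assumes "e \<notin> act k" "k \<le> m" shows "mu m e = mu k e"
  using assms(2)
proof (induction m rule: dec_induct)
  case base then show ?case by simp
next
  case (step m)
  then have "e \<notin> act m" using act_mono[of k m] assms(1) by blast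
  then show ?case using step mu_Suc_frozen by simp
qed

lemma feas: "feasible V E cV cE (mu k)"
proof (induction k)
  case 0
  have "vload E (\<lambda>_. 0) i = 0" for i unfolding vload_def by simp
  then show ?case using cVnn cEnn unfolding feasible_def by simp
next
  case (Suc k)
  show ?case
  proof (cases "act k = {}")
    case True then show ?thesis using Suc step_empty[of k] by simp
  next
    case False
    then show ?thesis using delta_props(2)[OF cg Suc act_sub False] step(1)[OF False] by simp
  qed
qed

lemma strict: "act k \<noteq> {} \<Longrightarrow> act (Suc k) \<subset> act k"
proof -
  assume ne: "act k \<noteq> {}"
  obtain e where e: "e \<in> act k" "(\<exists>i\<in>e. vsat E cV (mu (Suc k)) i) \<or> esat cE (mu (Suc k)) e"
    using delta_props(3)[OF cg feas[of k] act_sub ne] step(1)[OF ne] by auto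
  then have "e \<notin> act (Suc k)" using step(2)[OF ne] by auto
  then show ?thesis using act_mono1[of k] e(1) by blast
qed

lemma term_aux: "act k = {} \<or> card (act k) + k \<le> card E"
proof (induction k)
  case 0
  have "card (act 0) \<le> card E" by (rule card_mono[OF finE act_sub])
  then show ?case by simp
next
  case (Suc k)
  show ?case
  proof (cases "act k = {}")
    case True then show ?thesis using step_empty[of k] by simp
  next
    case False
    have "finite (act k)" using finE act_sub finite_subset by blast
    then have "card (act (Suc k)) < card (act k)"
      using strict[OF False] psubset_card_mono by blast
    then show ?thesis using Suc False by auto
  qed
qed

lemma term_ex: "\<exists>k. act k = {}"
proof -
  have "act (Suc (card E)) = {} \<or> card (act (Suc (card E))) + Suc (card E) \<le> card E"
    by (rule term_aux)
  then have "act (Suc (card E)) = {}" by linarith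
  then show ?thesis by blast
qed

definition "NN = (LEAST k. act k = {})"

lemma actN: "act NN = {}" unfolding NN_def using LeastI_ex[OF term_ex] .

lemma rtN: "rising_tide V E cV cE = mu NN" unfolding rising_tide_def NN_def ..

lemma before_N: "act k \<noteq> {} \<Longrightarrow> Suc k \<le> NN"
proof (rule ccontr)
  assume "act k \<noteq> {}" "\<not> Suc k \<le> NN"
  then have "NN \<le> k" by simp
  then have "act k \<subseteq> act NN" by (rule act_mono)
  then show False using actN \<open>act k \<noteq> {}\<close> by simp
qed

lemma vsat_clears: "vsat E cV (mu (Suc k)) i \<Longrightarrow> e \<in> act (Suc k) \<Longrightarrow> i \<notin> e"
proof (cases "act k = {}")
  case True then show "e \<in> act (Suc k) \<Longrightarrow> ?thesis" using step_empty[of k] by simp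
next
  case False then show "vsat E cV (mu (Suc k)) i \<Longrightarrow> e \<in> act (Suc k) \<Longrightarrow> ?thesis"
    using step(2)[OF False] by blast
qed

lemma level_inv: "e \<in> act k \<Longrightarrow> e' \<in> act k \<Longrightarrow> mu k e = mu k e'"
proof (induction k arbitrary: e e')
  case 0 then show ?case by simp
next
  case (Suc k)
  have a: "e \<in> act k" "e' \<in> act k" using Suc.prems act_mono1[of k] by auto
  then have ne: "act k \<noteq> {}" by auto
  show ?case using Suc.IH[OF a] a step(1)[OF ne] by (simp add: raise_def)
qed

lemma same_level: "e \<in> act k \<Longrightarrow> e' \<in> act k \<Longrightarrow> mu (Suc k) e = mu (Suc k) e'"
proof -
  assume a: "e \<in> act k" "e' \<in> act k"
  then have "act k \<noteq> {}" by auto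
  then show ?thesis using a level_inv[OF a] step(1) by (simp add: raise_def)
qed

lemma dep_iff: "(j, i) \<in> dep_graph V E cV cE \<longleftrightarrow>
  (\<exists>k. {i, j} \<in> E \<and> {i, j} \<in> act k \<and> {i, j} \<notin> act (Suc k) \<and> vsat E cV (mu (Suc k)) i)"
  unfolding dep_graph_def by simp

lemma owns_round:
  assumes "owns (dep_graph V E cV cE) i e"
  obtains k where "e \<in> E" "i \<in> e" "e \<in> act k" "e \<notin> act (Suc k)" "vsat E cV (mu (Suc k)) i"
proof -
  obtain j where j: "e = {i, j}" "(j, i) \<in> dep_graph V E cV cE" using assms unfolding owns_def by blast
  then obtain k where k: "{i, j} \<in> E" "{i, j} \<in> act k" "{i, j} \<notin> act (Suc k)" "vsat E cV (mu (Suc k)) i"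
    unfolding dep_iff by blast
  have "i \<in> e" using j(1) by blast
  then show thesis using that[of k] k j(1) by blast
qed

lemma R1:
  assumes "owns (dep_graph V E cV cE) i e" "owns (dep_graph V E cV cE) i e'"
  shows "mu NN e = mu NN e'"
proof -
  obtain k where k: "e \<in> E" "i \<in> e" "e \<in> act k" "e \<notin> act (Suc k)" "vsat E cV (mu (Suc k)) i"
    using owns_round[OF assms(1)] by blast
  obtain k' where k': "e' \<in> E" "i \<in> e'" "e' \<in> act k'" "e' \<notin> act (Suc k')" "vsat E cV (mu (Suc k')) i"
    using owns_round[OF assms(2)] by blast
  have "\<not> k < k'"
  proof
    assume "k < k'"
    then have "act k' \<subseteq> act (Suc k)" using act_mono by simp
    then show False using vsat_clears[OF k(5)] k'(2,3) by blast
  qed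
  moreover have "\<not> k' < k"
  proof
    assume "k' < k"
    then have "act k \<subseteq> act (Suc k')" using act_mono by simp
    then show False using vsat_clears[OF k'(5)] k(2,3) by blast
  qed
  ultimately have kk: "k = k'" by simp
  have ne: "act k \<noteq> {}" using k(3) by blast
  have ne': "act k' \<noteq> {}" using k'(3) by blast
  have "mu NN e = mu (Suc k) e" using frozen[OF k(4) before_N[OF ne]] .
  also have "\<dots> = mu (Suc k) e'" using same_level[OF k(3)] k'(3) kk by simp
  also have "\<dots> = mu NN e'" using frozen[OF k'(4) before_N[OF ne']] kk by simp
  finally show ?thesis .
qed

lemma R3:
  assumes "owns (dep_graph V E cV cE) i e"
  shows "vload E (mu NN) i = cV i"
proof -
  obtain k where k: "e \<in> E" "i \<in> e" "e \<in> act k" "e \<notin> act (Suc k)" "vsat E cV (mu (Suc k)) i"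
    using owns_round[OF assms] by blast
  have ne: "act k \<noteq> {}" using k(3) by blast
  have le: "Suc k \<le> NN" using before_N[OF ne] .
  have "vload E (mu NN) i = vload E (mu (Suc k)) i"
    unfolding vload_def
  proof (rule sum.cong)
    fix e' assume "e' \<in> {e \<in> E. i \<in> e}"
    then have "e' \<notin> act (Suc k)" using vsat_clears[OF k(5)] by blast
    then show "mu NN e' = mu (Suc k) e'" using frozen[OF _ le] by blast
  qed simp
  then show ?thesis using k(5) unfolding vsat_def by simp
qed

lemma R2:
  assumes eE: "e \<in> E" and no: "\<forall>i. \<not> owns (dep_graph V E cV cE) i e"
  shows "mu NN e = cE e"
proof (cases "e \<in> act 0")
  case False
  then have "\<not> 0 < cE e" using eE by simp
  moreover have "0 \<le> cE e" using cEnn eE by blast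
  ultimately have "cE e = 0" by linarith
  moreover have "mu NN e = mu 0 e" using frozen[OF False] by simp
  ultimately show ?thesis by simp
next
  case True
  have "e \<notin> act NN" using actN by simp
  then obtain k where k: "e \<in> act k" "e \<notin> act (Suc k)"
    using ex_switch[of "\<lambda>k. e \<in> act k", OF True] by blast
  have ne: "act k \<noteq> {}" using k by auto
  have disj: "(\<exists>i\<in>e. vsat E cV (mu (Suc k)) i) \<or> esat cE (mu (Suc k)) e"
    using k step(2)[OF ne] by auto
  have ce: "card e = 1 \<or> card e = 2" using cg eE unfolding cgraph_def by auto
  have "\<not> (\<exists>i\<in>e. vsat E cV (mu (Suc k)) i)"
  proof
    assume "\<exists>i\<in>e. vsat E cV (mu (Suc k)) i"
    then obtain i where i: "i \<in> e" "vsat E cV (mu (Suc k)) i" by blast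
    obtain j where j: "e = {i, j}" using edge_pair[OF ce i(1)] by blast
    have "owns (dep_graph V E cV cE) i e"
      unfolding owns_def dep_iff using j k i eE by blast
    then show False using no by blast
  qed
  then have "esat cE (mu (Suc k)) e" using disj by blast
  then have "mu (Suc k) e = cE e" unfolding esat_def .
  moreover have "mu NN e = mu (Suc k) e" using frozen[OF k(2) before_N[OF ne]] .
  ultimately show ?thesis by simp
qed

end


lemma counting:
  fixes x :: "'v set \<Rightarrow> real" and own :: "'v \<Rightarrow> 'v set \<Rightarrow> bool"
  assumes cg: "cgraph V E" and stE: "st \<in> E" and b0: "0 \<le> b"
    and own_in: "\<And>i e. own i e \<Longrightarrow> e \<in> E \<and> i \<in> e"
    and unowned: "\<And>e. e \<in> E \<Longrightarrow> \<forall>i. \<not> own i e \<Longrightarrow> e \<noteq> st \<Longrightarrow> x e = 0"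
    and stb: "\<forall>i. \<not> own i st \<Longrightarrow> \<bar>x st\<bar> \<le> b"
    and eq: "\<And>i e e'. own i e \<Longrightarrow> own i e' \<Longrightarrow> x e = x e'"
    and bal: "\<And>i e. own i e \<Longrightarrow> (\<Sum>e\<in>{e\<in>E. i\<in>e}. x e) = 0"
  shows "(\<Sum>i\<in>V. \<bar>\<Sum>e\<in>{e\<in>E. i\<in>e}. x e\<bar>) \<le> 2 * b"
proof -
  have fV: "finite V" using cg unfolding cgraph_def by blast
  have fE: "finite E" using cgraph_finE[OF cg] .
  have star: "\<bar>\<Sum>e\<in>{e\<in>E. i\<in>e}. x e\<bar> + (\<Sum>e\<in>{e\<in>E. own i e}. \<bar>x e\<bar>)
      \<le> (\<Sum>e\<in>{e\<in>E. i \<in> e \<and> \<not> own i e}. \<bar>x e\<bar>)" for i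
  proof -
    define Ow where "Ow = {e\<in>E. own i e}"
    define Rs where "Rs = {e\<in>E. i \<in> e \<and> \<not> own i e}"
    have split: "{e\<in>E. i\<in>e} = Ow \<union> Rs" unfolding Ow_def Rs_def using own_in by blast
    have fO: "finite Ow" "finite Rs" unfolding Ow_def Rs_def using fE by auto
    have disj: "Ow \<inter> Rs = {}" unfolding Ow_def Rs_def by blast
    have sN: "(\<Sum>e\<in>{e\<in>E. i\<in>e}. x e) = (\<Sum>e\<in>Ow. x e) + (\<Sum>e\<in>Rs. x e)"
      unfolding split using sum.union_disjoint[OF fO disj] by simp
    have aR: "\<bar>\<Sum>e\<in>Rs. x e\<bar> \<le> (\<Sum>e\<in>Rs. \<bar>x e\<bar>)" by (rule sum_abs)
    show ?thesis
    proof (cases "Ow = {}")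
      case True
      then show ?thesis using sN aR unfolding Ow_def[symmetric] Rs_def[symmetric] by simp
    next
      case False
      then obtain e0 where e0: "e0 \<in> Ow" by blast
      then have oe0: "own i e0" unfolding Ow_def by blast
      have c1: "(\<Sum>e\<in>Ow. x e) = (\<Sum>e\<in>Ow. x e0)"
        by (rule sum.cong) (auto simp: Ow_def intro: eq[OF _ oe0])
      have c2: "(\<Sum>e\<in>Ow. \<bar>x e\<bar>) = (\<Sum>e\<in>Ow. \<bar>x e0\<bar>)"
        by (rule sum.cong) (auto simp: Ow_def dest: eq[OF _ oe0])
      have "(\<Sum>e\<in>Ow. \<bar>x e\<bar>) = \<bar>\<Sum>e\<in>Ow. x e\<bar>"
        unfolding c1 c2 by (simp add: abs_mult)
      moreover have z: "(\<Sum>e\<in>{e\<in>E. i\<in>e}. x e) = 0" using bal[OF oe0] .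
      moreover have "\<bar>\<Sum>e\<in>Ow. x e\<bar> = \<bar>\<Sum>e\<in>Rs. x e\<bar>" using z sN by linarith
      ultimately show ?thesis using sN aR unfolding Ow_def[symmetric] Rs_def[symmetric] by simp
    qed
  qed
  have A: "(\<Sum>i\<in>V. \<bar>\<Sum>e\<in>{e\<in>E. i\<in>e}. x e\<bar>) + (\<Sum>i\<in>V. \<Sum>e\<in>{e\<in>E. own i e}. \<bar>x e\<bar>)
      \<le> (\<Sum>i\<in>V. \<Sum>e\<in>{e\<in>E. i \<in> e \<and> \<not> own i e}. \<bar>x e\<bar>)"
    unfolding sum.distrib[symmetric] by (rule sum_mono) (rule star)
  have S1: "(\<Sum>i\<in>V. \<Sum>e\<in>{e\<in>E. own i e}. \<bar>x e\<bar>) = (\<Sum>e\<in>E. \<bar>x e\<bar> * real (card {i\<in>V. own i e}))"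
    using sum.swap_restrict[OF fV fE, of "\<lambda>i e. \<bar>x e\<bar>" own] by (simp add: mult.commute)
  have S2: "(\<Sum>i\<in>V. \<Sum>e\<in>{e\<in>E. i \<in> e \<and> \<not> own i e}. \<bar>x e\<bar>)
      = (\<Sum>e\<in>E. \<bar>x e\<bar> * real (card {i\<in>V. i \<in> e \<and> \<not> own i e}))"
    using sum.swap_restrict[OF fV fE, of "\<lambda>i e. \<bar>x e\<bar>" "\<lambda>i e. i \<in> e \<and> \<not> own i e"]
    by (simp add: mult.commute)
  have per: "\<bar>x e\<bar> * real (card {i\<in>V. i \<in> e \<and> \<not> own i e})
      \<le> \<bar>x e\<bar> * real (card {i\<in>V. own i e}) + (if e = st then 2 * b else 0)" if eE: "e \<in> E" for e
  proof -
    have eV: "e \<subseteq> V" and ce: "card e = 1 \<or> card e = 2" using cg eE unfolding cgraph_def by auto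
    have fe: "finite e" using eV fV finite_subset by blast
    have cne: "card {i\<in>V. i \<in> e \<and> \<not> own i e} \<le> card e"
      by (rule card_mono[OF fe]) blast
    show ?thesis
    proof (cases "\<exists>i. own i e")
      case True
      then obtain i where oi: "own i e" by blast
      then have ie: "i \<in> e" using own_in by blast
      then have iV: "i \<in> V" using eV by blast
      have "card {i} \<le> card {i\<in>V. own i e}"
        by (rule card_mono) (use fV oi iV in auto)
      then have c1: "1 \<le> card {i\<in>V. own i e}" by simp
      have "card {i'\<in>V. i' \<in> e \<and> \<not> own i' e} \<le> card (e - {i})"
        by (rule card_mono) (use fe oi in auto)
      also have "\<dots> = card e - 1" using ie fe by simp
      finally have "card {i'\<in>V. i' \<in> e \<and> \<not> own i' e} \<le> 1" using ce by linarith
      then have "real (card {i\<in>V. i \<in> e \<and> \<not> own i e}) \<le> real (card {i\<in>V. own i e})"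
        using c1 by linarith
      then have "\<bar>x e\<bar> * real (card {i\<in>V. i \<in> e \<and> \<not> own i e}) \<le> \<bar>x e\<bar> * real (card {i\<in>V. own i e})"
        by (rule mult_left_mono) simp
      moreover have "0 \<le> (if e = st then 2 * b else 0)" using b0 by simp
      ultimately show ?thesis by linarith
    next
      case False
      show ?thesis
      proof (cases "e = st")
        case True
        have "\<bar>x e\<bar> \<le> b" using stb False True by blast
        moreover have "real (card {i\<in>V. i \<in> e \<and> \<not> own i e}) \<le> 2" using cne ce by linarith
        ultimately have "\<bar>x e\<bar> * real (card {i\<in>V. i \<in> e \<and> \<not> own i e}) \<le> b * 2"
          by (intro mult_mono) auto
        moreover have "0 \<le> \<bar>x e\<bar> * real (card {i\<in>V. own i e})" by simp
        ultimately have "\<bar>x e\<bar> * real (card {i\<in>V. i \<in> e \<and> \<not> own i e})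
          \<le> \<bar>x e\<bar> * real (card {i\<in>V. own i e}) + 2 * b" by linarith
        then show ?thesis using True by simp
      next
        case ne: False
        then have "x e = 0" using unowned[OF eE] False by blast
        then show ?thesis using ne by simp
      qed
    qed
  qed
  have "(\<Sum>e\<in>E. \<bar>x e\<bar> * real (card {i\<in>V. i \<in> e \<and> \<not> own i e}))
      \<le> (\<Sum>e\<in>E. \<bar>x e\<bar> * real (card {i\<in>V. own i e}) + (if e = st then 2 * b else 0))"
    by (rule sum_mono) (rule per)
  also have "\<dots> = (\<Sum>e\<in>E. \<bar>x e\<bar> * real (card {i\<in>V. own i e})) + 2 * b"
    using stE fE by (simp add: sum.distrib)
  finally show ?thesis using A S1 S2 by linarith
qed

theorem lemma24:
  fixes V :: "'v set" and E :: "'v set set" and cV :: "'v \<Rightarrow> real"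
    and cEG cEH :: "'v set \<Rightarrow> real" and s t :: 'v
  assumes "cgraph V E"
    and "\<forall>i\<in>V. 0 \<le> cV i"
    and "\<forall>e\<in>E. 0 \<le> cEG e" and "\<forall>e\<in>E. 0 \<le> cEH e"
    and "{s, t} \<in> E"
    and "\<forall>e\<in>E. e \<noteq> {s, t} \<longrightarrow> cEG e = cEH e"
    and "no_simult_sat V E cV cEG" and "no_simult_sat V E cV cEH"
    and "dep_graph V E cV cEG = dep_graph V E cV cEH"
  shows "(\<Sum>i\<in>V. \<bar>(cV i - vload E (rising_tide V E cV cEG) i)
                   - (cV i - vload E (rising_tide V E cV cEH) i)\<bar>)
         \<le> 2 * \<bar>cEG {s, t} - cEH {s, t}\<bar>"
proof -
  interpret G: RT V E cV cEG using assms(1-3) by unfold_locales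
  interpret H: RT V E cV cEH using assms(1,2,4) by unfold_locales
  define D where "D = dep_graph V E cV cEG"
  have DH: "dep_graph V E cV cEH = D" using assms(9) D_def by simp
  define muG where "muG = rising_tide V E cV cEG"
  define muH where "muH = rising_tide V E cV cEH"
  define x where "x = (\<lambda>e. muH e - muG e)"
  have lhs: "\<bar>(cV i - vload E muG i) - (cV i - vload E muH i)\<bar> = \<bar>\<Sum>e\<in>{e\<in>E. i\<in>e}. x e\<bar>" for i
    unfolding x_def vload_def by (simp add: sum_subtractf)
  have "(\<Sum>i\<in>V. \<bar>\<Sum>e\<in>{e\<in>E. i\<in>e}. x e\<bar>) \<le> 2 * \<bar>cEG {s, t} - cEH {s, t}\<bar>"
  proof (rule counting[OF assms(1) assms(5), of _ "owns D"])
    show "0 \<le> \<bar>cEG {s, t} - cEH {s, t}\<bar>" by simp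
  next
    fix i e assume "owns D i e"
    then show "e \<in> E \<and> i \<in> e" unfolding D_def by (elim G.owns_round) auto
  next
    fix e assume eE: "e \<in> E" and no: "\<forall>i. \<not> owns D i e" and ne: "e \<noteq> {s, t}"
    have "muG e = cEG e" unfolding muG_def G.rtN using G.R2[OF eE] no D_def by blast
    moreover have "muH e = cEH e" unfolding muH_def H.rtN using H.R2[OF eE] no DH by blast
    ultimately show "x e = 0" using assms(6) eE ne unfolding x_def by simp
  next
    assume no: "\<forall>i. \<not> owns D i {s, t}"
    have "muG {s, t} = cEG {s, t}" unfolding muG_def G.rtN using G.R2[OF assms(5)] no D_def by blast
    moreover have "muH {s, t} = cEH {s, t}" unfolding muH_def H.rtN using H.R2[OF assms(5)] no DH by blast
    ultimately show "\<bar>x {s, t}\<bar> \<le> \<bar>cEG {s, t} - cEH {s, t}\<bar>" unfolding x_def by simp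
  next
    fix i e e' assume o: "owns D i e" "owns D i e'"
    have "muG e = muG e'" unfolding muG_def G.rtN using G.R1 o D_def by blast
    moreover have "muH e = muH e'" unfolding muH_def H.rtN using H.R1 o DH by blast
    ultimately show "x e = x e'" unfolding x_def by simp
  next
    fix i e assume o: "owns D i e"
    have "vload E muG i = cV i" unfolding muG_def G.rtN using G.R3 o D_def by blast
    moreover have "vload E muH i = cV i" unfolding muH_def H.rtN using H.R3 o DH by blast
    ultimately show "(\<Sum>e\<in>{e\<in>E. i\<in>e}. x e) = 0"
      unfolding x_def using lhs[of i] unfolding x_def by simp
  qed
  then show ?thesis using lhs unfolding muG_def muH_def by simp
qed

end
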